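(* Let $G=(V,E)$ be a 4-regular 4-edge-connected graph, let $T$ be a spanning tree of $G$ with no vertex of degree four, rooted at a leaf $r$ of $T$, and let $L=E\setminus T$. Let $G'=(V',E')$, $T'$ and $L'=E'\setminus T'$ be the subdivided graph, tree and links. Then: (1) for any $F'\subseteq L'$ such that $T'+F'$ is 2-edge-connected, $T+F$ is 2-vertex-connected, where $F\subseteq L$ is the set of links corresponding to $F'$; and (2) for every edge $e'\in T'$ there are at least two links $\ell'_1,\ell'_2\in L'$ whose paths in $T'$ contain $e'$.
   Context: For a link $\ell\in L$, $P_\ell$ denotes the path in $T$ between the endpoints of $\ell$. The subdivided graph $G'$ is obtained from $G$ as follows: each tree edge $e=uw\in T$ is subdivided into two edges $uv_e$ and $v_ew$ with a new vertex $v_e$, and $T'$ consists of all these edges. For each link $\ell\in L$ a link $\ell'\in L'$ is created: for each endpoint $u$ of $\ell$, if $u$ is the root or a leaf of $T$ then $u$ is an endpoint of $\ell'$; if $u$ is an internal vertex of $T$, let $e$ be the (unique) edge of $P_\ell$ incident to $u$, and then $v_e$ is an endpoint of $\ell'$. This gives a bijection $\ell\leftrightarrow\ell'$ between $L$ and $L'$, and for $F'\subseteq L'$, $F$ denotes the corresponding subset of $L$. $T+F$ denotes the graph $(V,T\cup F)$. *)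

theory Defs
  imports Main
begin

definition graph :: "'a set \<Rightarrow> 'a set set \<Rightarrow> bool" where
  "graph V E \<longleftrightarrow> finite V \<and> (\<forall>e\<in>E. \<exists>u w. u \<in> V \<and> w \<in> V \<and> u \<noteq> w \<and> e = {u, w})"

definition degree :: "'a set set \<Rightarrow> 'a \<Rightarrow> nat" where
  "degree E v = card {e \<in> E. v \<in> e}"

definition adj_rel :: "'a set set \<Rightarrow> ('a \<times> 'a) set" where
  "adj_rel E = {(x, y). {x, y} \<in> E}"

definition connected_graph :: "'a set \<Rightarrow> 'a set set \<Rightarrow> bool" where
  "connected_graph V E \<longleftrightarrow>
     (\<forall>u\<in>V. \<forall>w\<in>V. (u, w) \<in> (adj_rel {e \<in> E. e \<subseteq> V})\<^sup>*)"

definition k_edge_connected :: "nat \<Rightarrow> 'a set \<Rightarrow> 'a set set \<Rightarrow> bool" where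
  "k_edge_connected k V E \<longleftrightarrow>
     (\<forall>D \<subseteq> E. card D < k \<longrightarrow> connected_graph V (E - D))"

definition k_vertex_connected :: "nat \<Rightarrow> 'a set \<Rightarrow> 'a set set \<Rightarrow> bool" where
  "k_vertex_connected k V E \<longleftrightarrow> card V > k \<and>
     (\<forall>X \<subseteq> V. card X < k \<longrightarrow> connected_graph (V - X) {e \<in> E. e \<inter> X = {}})"

definition is_path :: "'a set set \<Rightarrow> 'a \<Rightarrow> 'a \<Rightarrow> 'a list \<Rightarrow> bool" where
  "is_path E u w p \<longleftrightarrow> p \<noteq> [] \<and> hd p = u \<and> last p = w \<and> distinct p \<and>
     (\<forall>i. Suc i < length p \<longrightarrow> {p ! i, p ! Suc i} \<in> E)"

definition path_edges :: "'a list \<Rightarrow> 'a set set" where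
  "path_edges p = {{p ! i, p ! Suc i} | i. Suc i < length p}"

definition acyclic_graph :: "'a set set \<Rightarrow> bool" where
  "acyclic_graph E \<longleftrightarrow> \<not> (\<exists>p. length p \<ge> 3 \<and> distinct p \<and>
     (\<forall>i. Suc i < length p \<longrightarrow> {p ! i, p ! Suc i} \<in> E) \<and> {last p, hd p} \<in> E)"

definition is_tree :: "'a set \<Rightarrow> 'a set set \<Rightarrow> bool" where
  "is_tree V T \<longleftrightarrow> graph V T \<and> connected_graph V T \<and> acyclic_graph T"

definition spanning_tree :: "'a set \<Rightarrow> 'a set set \<Rightarrow> 'a set set \<Rightarrow> bool" where
  "spanning_tree V E T \<longleftrightarrow> T \<subseteq> E \<and> is_tree V T"

definition tree_path :: "'a set set \<Rightarrow> 'a \<Rightarrow> 'a \<Rightarrow> 'a list" where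
  "tree_path T u w = (THE p. is_path T u w p)"

text \<open>Edges of P_l, the tree path between the endpoints of a link l.\<close>
definition link_path :: "'a set set \<Rightarrow> 'a set \<Rightarrow> 'a set set" where
  "link_path T l = (\<Union>u\<in>l. \<Union>w\<in>l. if u \<noteq> w then path_edges (tree_path T u w) else {})"

text \<open>Subdivision: original vertices are Inl v, the subdivision vertex v_e of
tree edge e is Inr e.\<close>
definition sub_vertices :: "'a set \<Rightarrow> 'a set set \<Rightarrow> ('a + 'a set) set" where
  "sub_vertices V T = Inl ` V \<union> Inr ` T"

definition sub_tree :: "'a set set \<Rightarrow> ('a + 'a set) set set" where
  "sub_tree T = {{Inl u, Inr e} | u e. e \<in> T \<and> u \<in> e}"

text \<open>Endpoint of l' corresponding to endpoint u of link l (tree T, root r).\<close>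
definition sub_end :: "'a set set \<Rightarrow> 'a \<Rightarrow> 'a set \<Rightarrow> 'a \<Rightarrow> 'a + 'a set" where
  "sub_end T r l u =
     (if u = r \<or> degree T u = 1 then Inl u
      else Inr (THE e. e \<in> link_path T l \<and> u \<in> e))"

definition sub_link :: "'a set set \<Rightarrow> 'a \<Rightarrow> 'a set \<Rightarrow> ('a + 'a set) set" where
  "sub_link T r l = sub_end T r l ` l"

end

theory Submission imports Defs begin

definition reach :: "'a set set \<Rightarrow> 'a \<Rightarrow> 'a \<Rightarrow> bool" where
  "reach E a b \<longleftrightarrow> (a, b) \<in> (adj_rel E)\<^sup>*"

definition bridges :: "'a set set \<Rightarrow> bool" where
  "bridges E \<longleftrightarrow> (\<forall>x y. {x, y} \<in> E \<longrightarrow> x \<noteq> y \<longrightarrow> \<not> reach (E - {{x, y}}) x y)"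

fun chain :: "'a set set \<Rightarrow> 'a list \<Rightarrow> bool" where
  "chain E [] = True"
| "chain E [x] = True"
| "chain E (x # y # zs) = ({x, y} \<in> E \<and> chain E (y # zs))"

lemma reach_refl[simp]: "reach E a a"
  by (simp add: reach_def)

lemma reach_step: "{a, b} \<in> E \<Longrightarrow> reach E a b"
  by (auto simp: reach_def adj_rel_def)

lemma reach_trans: "reach E a b \<Longrightarrow> reach E b c \<Longrightarrow> reach E a c"
  unfolding reach_def by (rule rtrancl_trans)

lemma adj_rel_sym: "sym (adj_rel E)"
  by (auto simp: sym_def adj_rel_def insert_commute)

lemma reach_sym: "reach E a b \<Longrightarrow> reach E b a"
  unfolding reach_def
  by (metis adj_rel_sym rtrancl_converseD sym_conv_converse_eq sym_rtrancl)

lemma reach_mono: "reach E a b \<Longrightarrow> E \<subseteq> E' \<Longrightarrow> reach E' a b"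
proof -
  assume "reach E a b" "E \<subseteq> E'"
  have "adj_rel E \<subseteq> adj_rel E'" using \<open>E \<subseteq> E'\<close> by (auto simp: adj_rel_def)
  then show ?thesis using \<open>reach E a b\<close> unfolding reach_def
    by (meson rtrancl_mono subsetD)
qed

lemma reach_closed:
  assumes "reach E a b" "a \<in> S" "\<And>x y. x \<in> S \<Longrightarrow> {x, y} \<in> E \<Longrightarrow> y \<in> S"
  shows "b \<in> S"
  using assms(1)[unfolded reach_def] assms(2)
proof (induction rule: rtrancl_induct)
  case base then show ?case by simp
next
  case (step y z) then show ?case using assms(3) by (auto simp: adj_rel_def)
qed

lemma chain_iff: "(\<forall>i. Suc i < length p \<longrightarrow> {p ! i, p ! Suc i} \<in> E) \<longleftrightarrow> chain E p"
proof (induction p rule: chain.induct)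
  case (3 E x y zs)
  show ?case
  proof
    assume H: "\<forall>i. Suc i < length (x # y # zs) \<longrightarrow> {(x # y # zs) ! i, (x # y # zs) ! Suc i} \<in> E"
    have "{x, y} \<in> E" using H[rule_format, of 0] by simp
    moreover have "\<forall>i. Suc i < length (y # zs) \<longrightarrow> {(y # zs) ! i, (y # zs) ! Suc i} \<in> E"
      using H by (metis Suc_less_eq length_Cons nth_Cons_Suc)
    ultimately show "chain E (x # y # zs)" using 3 by simp
  next
    assume "chain E (x # y # zs)"
    then have "{x, y} \<in> E" "\<forall>i. Suc i < length (y # zs) \<longrightarrow> {(y # zs) ! i, (y # zs) ! Suc i} \<in> E"
      using 3 by auto
    then show "\<forall>i. Suc i < length (x # y # zs) \<longrightarrow> {(x # y # zs) ! i, (x # y # zs) ! Suc i} \<in> E"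
      by (metis Suc_less_eq length_Cons less_Suc_eq_0_disj nth_Cons_0 nth_Cons_Suc)
  qed
qed auto

lemma is_path_iff: "is_path E u w p \<longleftrightarrow> p \<noteq> [] \<and> hd p = u \<and> last p = w \<and> distinct p \<and> chain E p"
  unfolding is_path_def chain_iff by simp

lemma path_edges_Nil[simp]: "path_edges [] = {}"
  by (simp add: path_edges_def)
lemma path_edges_single[simp]: "path_edges [x] = {}"
  by (simp add: path_edges_def)
lemma path_edges_Cons2[simp]: "path_edges (x # y # zs) = insert {x, y} (path_edges (y # zs))"
proof (rule set_eqI)
  fix f
  show "f \<in> path_edges (x # y # zs) \<longleftrightarrow> f \<in> insert {x, y} (path_edges (y # zs))"
  proof
    assume "f \<in> path_edges (x # y # zs)"
    then obtain i where i: "f = {(x # y # zs) ! i, (x # y # zs) ! Suc i}" "Suc i < length (x # y # zs)"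
      by (auto simp: path_edges_def)
    show "f \<in> insert {x, y} (path_edges (y # zs))"
    proof (cases i)
      case 0 then show ?thesis using i by simp
    next
      case (Suc j) then show ?thesis using i by (auto simp: path_edges_def)
    qed
  next
    assume "f \<in> insert {x, y} (path_edges (y # zs))"
    then show "f \<in> path_edges (x # y # zs)"
    proof
      assume "f = {x, y}" then show ?thesis unfolding path_edges_def
        by (intro CollectI exI[of _ 0]) simp
    next
      assume "f \<in> path_edges (y # zs)"
      then obtain i where i: "f = {(y # zs) ! i, (y # zs) ! Suc i}" "Suc i < length (y # zs)"
        by (auto simp: path_edges_def)
      then show ?thesis unfolding path_edges_def
        by (intro CollectI exI[of _ "Suc i"]) simp
    qed
  qed
qed

lemma chain_reach: "chain E p \<Longrightarrow> p \<noteq> [] \<Longrightarrow> reach E (hd p) (last p)"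
  by (induction E p rule: chain.induct) (auto intro: reach_trans reach_step)

lemma chain_edges: "chain E p \<longleftrightarrow> path_edges p \<subseteq> E"
  by (induction E p rule: chain.induct) auto

lemma path_edges_sub: "f \<in> path_edges p \<Longrightarrow> f \<subseteq> set p"
  by (induction p rule: induct_list012) auto

lemma path_edges_Cons_sub: "path_edges l \<subseteq> path_edges (x # l)"
  by (cases l) auto

lemma path_edges_suffix: "path_edges ys \<subseteq> path_edges (xs @ ys)"
  by (induction xs) (auto dest: subsetD[OF path_edges_Cons_sub])

lemma chain_append_suffix: "chain E (xs @ ys) \<Longrightarrow> chain E ys"
  using path_edges_suffix[of ys xs] by (auto simp: chain_edges)

lemma chain_Cons: "chain E p \<Longrightarrow> p \<noteq> [] \<Longrightarrow> {y, hd p} \<in> E \<Longrightarrow> chain E (y # p)"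
  by (cases p) auto

lemma reach_path:
  assumes "reach E u w"
  shows "\<exists>p. p \<noteq> [] \<and> hd p = u \<and> last p = w \<and> distinct p \<and> chain E p"
  using assms[unfolded reach_def]
proof (induction rule: converse_rtrancl_induct)
  case base
  then show ?case by (rule exI[of _ "[w]"]) simp
next
  case (step y z)
  then obtain p where p: "p \<noteq> []" "hd p = z" "last p = w" "distinct p" "chain E p" by blast
  show ?case
  proof (cases "y \<in> set p")
    case True
    then obtain xs ys where "p = xs @ y # ys" by (meson split_list)
    then show ?thesis using p
      by (intro exI[of _ "y # ys"]) (auto dest: chain_append_suffix)
  next
    case False
    then show ?thesis using p step(1)
      by (intro exI[of _ "y # p"]) (auto simp: adj_rel_def intro: chain_Cons)
  qed
qed

lemma chain_mono: "chain E p \<Longrightarrow> E \<subseteq> E' \<Longrightarrow> chain E' p"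
  by (auto simp: chain_edges)

lemma chain_sub: "chain E p \<Longrightarrow> chain {f \<in> E. f \<subseteq> set p} p"
  using path_edges_sub[of _ p] by (auto simp: chain_edges)

lemma acyclic_bridges:
  assumes "acyclic_graph E"
  shows "bridges E"
  unfolding bridges_def
proof (intro allI impI notI)
  fix x y
  assume xy: "{x, y} \<in> E" "x \<noteq> y" and r: "reach (E - {{x, y}}) x y"
  obtain q where q: "q \<noteq> []" "hd q = x" "last q = y" "distinct q" "chain (E - {{x, y}}) q"
    using reach_path[OF r] by blast
  obtain q' where q': "q = x # q'" using q by (cases q) auto
  have "q' \<noteq> []" using q q' xy by auto
  then obtain z q'' where z: "q' = z # q''" by (cases q') auto
  have "q'' \<noteq> []"
  proof
    assume "q'' = []"
    then have "z = y" using q q' z by simp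
    then show False using q(5) q' z \<open>q'' = []\<close> by simp
  qed
  then have "length q \<ge> 3" using q' z by (cases q'') auto
  moreover have "chain E q" using q(5) by (rule chain_mono) auto
  moreover have "{last q, hd q} \<in> E" using q xy by (simp add: insert_commute)
  ultimately show False using assms q(4) unfolding acyclic_graph_def chain_iff by blast
qed

lemma distinct_hd_last: "distinct q \<Longrightarrow> q \<noteq> [] \<Longrightarrow> hd q = last q \<Longrightarrow> q = [hd q]"
  by (cases q) (auto, metis last_in_set)

lemma path_unique:
  assumes "bridges E"
  shows "chain E p \<Longrightarrow> distinct p \<Longrightarrow> p \<noteq> [] \<Longrightarrow> chain E q \<Longrightarrow> distinct q \<Longrightarrow> q \<noteq> []
    \<Longrightarrow> hd p = hd q \<Longrightarrow> last p = last q \<Longrightarrow> p = q"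
proof (induction p arbitrary: q)
  case Nil then show ?case by simp
next
  case (Cons a p)
  show ?case
  proof (cases p)
    case Nil
    then have "q = [hd q]" using Cons.prems by (intro distinct_hd_last) auto
    then show ?thesis using Cons.prems Nil by simp
  next
    case (Cons z ps)
    note pz = this
    obtain q' where q': "q = a # q'" using Cons.prems by (cases q) auto
    have "q' \<noteq> []"
    proof
      assume "q' = []"
      then have "last (a # p) = a" using Cons.prems q' by simp
      then show False using Cons.prems(2) pz by (metis distinct.simps(2) last.simps last_in_set list.distinct(1))
    qed
    then obtain z' qs where z': "q' = z' # qs" by (cases q') auto
    have "z' = z"
    proof (rule ccontr)
      assume nz: "z' \<noteq> z"
      have az: "a \<noteq> z" "{a, z} \<in> E" using Cons.prems pz by auto
      have br: "\<not> reach (E - {{a, z}}) a z" using assms az unfolding bridges_def by blast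
      have "chain {f \<in> E. f \<subseteq> set p} p"
        using Cons.prems(1) pz by (intro chain_sub) (auto simp: chain_edges)
      then have "chain (E - {{a, z}}) p" using Cons.prems(2) by (auto elim!: chain_mono)
      then have r1: "reach (E - {{a, z}}) z (last p)" using chain_reach[of _ p] pz by simp
      have "chain {f \<in> E. f \<subseteq> set q'} q'"
        using Cons.prems(4) q' z' by (intro chain_sub) (auto simp: chain_edges)
      then have "chain (E - {{a, z}}) q'" using Cons.prems(5) q' by (auto elim!: chain_mono)
      moreover have "{a, z'} \<in> E - {{a, z}}" using Cons.prems(4) q' z' nz az
        by (auto simp: doubleton_eq_iff)
      ultimately have "chain (E - {{a, z}}) q" using q' z' by simp
      then have r2: "reach (E - {{a, z}}) a (last q)" using chain_reach[of _ q] q' by simp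
      have "last q = last p" using Cons.prems pz by simp
      then show False using r1 r2 br by (metis reach_sym reach_trans)
    qed
    have "p = q'"
      using Cons.IH[of q'] Cons.prems q' z' pz \<open>z' = z\<close>
      by (auto simp: chain_edges)
    then show ?thesis using q' by simp
  qed
qed

lemma path_edges_cut:
  assumes "bridges E"
  shows "chain E p \<Longrightarrow> distinct p \<Longrightarrow> p \<noteq> [] \<Longrightarrow>
    path_edges p = {f \<in> E. \<not> reach (E - {f}) (hd p) (last p)}"
proof (induction p rule: induct_list012)
  case 1 then show ?case by simp
next
  case (2 x)
  then show ?case by auto
next
  case (3 a z ps)
  have IH: "path_edges (z # ps) = {f \<in> E. \<not> reach (E - {f}) z (last (z # ps))}"
    using 3 by simp
  have az: "{a, z} \<in> E" "a \<noteq> z" "a \<notin> set (z # ps)" using 3 by auto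
  have ch: "chain {f \<in> E. f \<subseteq> set (z # ps)} (z # ps)" using 3 by (intro chain_sub) simp
  show ?case
  proof (rule set_eqI, rule iffI)
    fix f assume "f \<in> path_edges (a # z # ps)"
    then consider "f = {a, z}" | "f \<in> path_edges (z # ps)" by auto
    then show "f \<in> {f \<in> E. \<not> reach (E - {f}) (hd (a # z # ps)) (last (a # z # ps))}"
    proof cases
      case 1
      have br: "\<not> reach (E - {{a, z}}) a z" using assms az unfolding bridges_def by blast
      have "chain (E - {{a, z}}) (z # ps)" using ch az by (auto elim!: chain_mono)
      then have "reach (E - {{a, z}}) z (last (z # ps))" using chain_reach by fastforce
      then have "\<not> reach (E - {{a, z}}) a (last (z # ps))" using br by (metis reach_sym reach_trans)
      then show ?thesis using 1 az by simp
    next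
      case 2
      then have fE: "f \<in> E" "\<not> reach (E - {f}) z (last (z # ps))" using IH by auto
      have "a \<notin> f" using 2 az path_edges_sub by blast
      then have "{a, z} \<in> E - {f}" using az by auto
      then have "reach (E - {f}) z a" by (auto intro: reach_step reach_sym)
      then have "\<not> reach (E - {f}) a (last (z # ps))" using fE by (metis reach_trans)
      then show ?thesis using fE by simp
    qed
  next
    fix f assume f: "f \<in> {f \<in> E. \<not> reach (E - {f}) (hd (a # z # ps)) (last (a # z # ps))}"
    show "f \<in> path_edges (a # z # ps)"
    proof (rule ccontr)
      assume "f \<notin> path_edges (a # z # ps)"
      then have "chain (E - {f}) (a # z # ps)" using 3(3) by (auto simp: chain_edges)
      then show False using f chain_reach[of "E - {f}" "a # z # ps"] by simp
    qed
  qed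
qed

lemma tree_path_props:
  assumes "bridges E" "reach E a b"
  shows "is_path E a b (tree_path E a b)"
    "path_edges (tree_path E a b) = {f \<in> E. \<not> reach (E - {f}) a b}"
proof -
  have "\<exists>!p. is_path E a b p"
  proof -
    obtain p where "is_path E a b p" using reach_path[OF assms(2)] by (auto simp: is_path_iff)
    moreover have "q = p" if "is_path E a b q" for q
      using path_unique[OF assms(1)] that \<open>is_path E a b p\<close> by (auto simp: is_path_iff)
    ultimately show ?thesis by blast
  qed
  then show P: "is_path E a b (tree_path E a b)" unfolding tree_path_def by (rule theI')
  show "path_edges (tree_path E a b) = {f \<in> E. \<not> reach (E - {f}) a b}"
    using path_edges_cut[OF assms(1)] P by (auto simp: is_path_iff)
qed

lemma link_path_cut:
  assumes "bridges E" "reach E a b" "a \<noteq> b"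
  shows "link_path E {a, b} = {f \<in> E. \<not> reach (E - {f}) a b}"
proof -
  have "link_path E {a, b} = path_edges (tree_path E a b) \<union> path_edges (tree_path E b a)"
    using assms(3) by (auto simp: link_path_def)
  also have "\<dots> = {f \<in> E. \<not> reach (E - {f}) a b}"
    using tree_path_props(2)[OF assms(1,2)] tree_path_props(2)[OF assms(1) reach_sym[OF assms(2)]]
    by (metis (no_types, lifting) reach_sym sup.idem Collect_cong)
  finally show ?thesis .
qed

lemma first_edge:
  assumes "bridges E" "reach E a b" "a \<noteq> b"
  shows "\<exists>z. {a, z} \<in> E \<and> a \<noteq> z \<and> reach {f \<in> E. a \<notin> f} z b \<and>
    {g \<in> link_path E {a, b}. a \<in> g} = {{a, z}}"
proof -
  let ?p = "tree_path E a b"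
  have P: "is_path E a b ?p" "path_edges ?p = {f \<in> E. \<not> reach (E - {f}) a b}"
    using tree_path_props[OF assms(1,2)] by auto
  obtain z ps where zp: "?p = a # z # ps" using P(1) assms(3) unfolding is_path_iff
    by (metis hd_Cons_tl last_ConsL list.exhaust)
  have az: "{a, z} \<in> E" "a \<noteq> z" "a \<notin> set (z # ps)" "distinct (z # ps)" "last (z # ps) = b"
    using P(1) zp by (auto simp: is_path_iff)
  have ch: "chain {f \<in> E. f \<subseteq> set (z # ps)} (z # ps)" using P(1) zp by (intro chain_sub) (simp add: is_path_iff)
  then have "chain {f \<in> E. a \<notin> f} (z # ps)" using az by (auto elim!: chain_mono)
  then have r: "reach {f \<in> E. a \<notin> f} z b" using chain_reach[of _ "z # ps"] az by simp
  have "link_path E {a, b} = path_edges ?p" using link_path_cut[OF assms] P(2) by simp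
  also have "\<dots> = insert {a, z} (path_edges (z # ps))" using zp by simp
  finally have "{g \<in> link_path E {a, b}. a \<in> g} = {{a, z}}"
    using az path_edges_sub[of _ "z # ps"] by auto
  then show ?thesis using az r by blast
qed

locale L15 =
  fixes V :: "'a set" and E T :: "'a set set" and r :: 'a
  assumes G: "graph V E"
    and reg: "\<forall>v\<in>V. degree E v = 4"
    and conn: "k_edge_connected 4 V E"
    and tree: "spanning_tree V E T"
    and nodeg4: "\<forall>v\<in>V. degree T v \<noteq> 4"
    and root: "r \<in> V" "degree T r = 1"
begin

lemma finV: "finite V" using G by (simp add: graph_def)

lemma edgeE: "e \<in> E \<Longrightarrow> \<exists>u w. u \<in> V \<and> w \<in> V \<and> u \<noteq> w \<and> e = {u, w}"
  using G by (simp add: graph_def)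

lemma TE: "T \<subseteq> E" using tree by (simp add: spanning_tree_def)

lemma edgeT: "e \<in> T \<Longrightarrow> \<exists>u w. u \<in> V \<and> w \<in> V \<and> u \<noteq> w \<and> e = {u, w}"
  using TE edgeE by blast

lemma EsubV: "e \<in> E \<Longrightarrow> e \<subseteq> V" using edgeE by blast

lemma finE: "finite E"
proof -
  have "E \<subseteq> Pow V" using EsubV by blast
  then show ?thesis using finV by (meson finite_Pow_iff finite_subset)
qed

lemma finT: "finite T" using finE TE by (rule rev_finite_subset)

lemma bridgesT: "bridges T"
  using tree by (intro acyclic_bridges) (simp add: spanning_tree_def is_tree_def)

lemma reachT: "a \<in> V \<Longrightarrow> b \<in> V \<Longrightarrow> reach T a b"
  using tree unfolding spanning_tree_def is_tree_def connected_graph_def reach_def[symmetric]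
  by (blast intro: reach_mono)

lemma two_sides:
  assumes g: "{p, q} \<in> T" and v: "v \<in> V" and pV: "p \<in> V"
  shows "reach (T - {{p, q}}) v p \<or> reach (T - {{p, q}}) v q"
proof -
  have "(v, p) \<in> (adj_rel T)\<^sup>*" using reachT[OF v pV] by (simp add: reach_def)
  then show ?thesis
  proof (induction rule: converse_rtrancl_induct)
    case base then show ?case by simp
  next
    case (step y y')
    then have yy: "{y, y'} \<in> T" by (simp add: adj_rel_def)
    show ?case
    proof (cases "{y, y'} = {p, q}")
      case True
      then have "y = p \<or> y = q" by (auto simp: doubleton_eq_iff)
      then show ?thesis by auto
    next
      case False
      then have "reach (T - {{p, q}}) y y'" using yy by (intro reach_step) simp
      then show ?thesis using step.IH by (metis reach_trans)
    qed
  qed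
qed

definition leafr :: "'a \<Rightarrow> bool" where "leafr a \<longleftrightarrow> a = r \<or> degree T a = 1"

lemma sub_end_cases:
  assumes "a \<in> V" "b \<in> V" "a \<noteq> b"
  shows "(leafr a \<and> sub_end T r {a, b} a = Inl a) \<or>
    (\<not> leafr a \<and> (\<exists>z. sub_end T r {a, b} a = Inr {a, z} \<and> {a, z} \<in> T \<and> a \<noteq> z \<and>
       reach {f \<in> T. a \<notin> f} z b \<and> \<not> reach (T - {{a, z}}) a b))"
proof (cases "leafr a")
  case True then show ?thesis by (simp add: sub_end_def leafr_def)
next
  case False
  have rab: "reach T a b" using reachT assms by simp
  obtain z where z: "{a, z} \<in> T" "a \<noteq> z" "reach {f \<in> T. a \<notin> f} z b"
    "{g \<in> link_path T {a, b}. a \<in> g} = {{a, z}}"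
    using first_edge[OF bridgesT rab assms(3)] by blast
  have "(THE g. g \<in> link_path T {a, b} \<and> a \<in> g) = {a, z}"
    using z(4) by (intro the_equality) blast+
  then have "sub_end T r {a, b} a = Inr {a, z}" using False by (simp add: sub_end_def leafr_def)
  moreover have "\<not> reach (T - {{a, z}}) a b"
    using z(4) link_path_cut[OF bridgesT rab assms(3)] by blast
  ultimately show ?thesis using False z by blast
qed


lemma sub_tree_edge:
  "{X, Y} \<in> sub_tree T \<longleftrightarrow> (\<exists>u e. e \<in> T \<and> u \<in> e \<and>
     ((X = Inl u \<and> Y = Inr e) \<or> (X = Inr e \<and> Y = Inl u)))"
  by (auto simp: sub_tree_def doubleton_eq_iff)

lemma other_end:
  assumes "e \<in> T" "u \<in> e"
  obtains x where "e = {u, x}" "u \<noteq> x" "x \<in> V" "u \<in> V"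
  using edgeT[OF assms(1)] assms(2) by (metis insert_commute insertE singletonD)

lemma sub_cut:
  assumes e: "e \<in> T" "u \<in> e"
    and S: "S = {s. reach (T - {e}) u s}"
    and S': "S' = Inl ` S \<union> Inr ` {f \<in> T. f \<subseteq> S}"
    and X: "X \<in> S'" and R: "reach (sub_tree T - {{Inl u, Inr e}}) X Y"
  shows "Y \<in> S'"
proof -
  obtain x where x: "e = {u, x}" "u \<noteq> x" using other_end e by blast
  have xS: "x \<notin> S" using bridgesT e x S unfolding bridges_def by blast
  show ?thesis
  proof (rule reach_closed[OF R X])
    fix A B assume A: "A \<in> S'" and AB: "{A, B} \<in> sub_tree T - {{Inl u, Inr e}}"
    then obtain s f where sf: "f \<in> T" "s \<in> f" "(A = Inl s \<and> B = Inr f) \<or> (A = Inr f \<and> B = Inl s)"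
      using sub_tree_edge by blast
    from sf(3) show "B \<in> S'"
    proof
      assume AB': "A = Inl s \<and> B = Inr f"
      then have sS: "s \<in> S" using A S' by auto
      have "f \<noteq> e"
      proof
        assume "f = e"
        then have "s = u" using sf sS xS x by auto
        then show False using AB AB' \<open>f = e\<close> by simp
      qed
      obtain t where t: "f = {s, t}" using other_end sf by blast
      have "reach (T - {e}) s t" using t sf \<open>f \<noteq> e\<close> by (intro reach_step) simp
      then have "t \<in> S" using sS S by (auto intro: reach_trans)
      then show ?thesis using AB' S' sf t sS by auto
    next
      assume AB': "A = Inr f \<and> B = Inl s"
      then have "f \<subseteq> S" using A S' by auto
      then show ?thesis using AB' S' sf by auto
    qed
  qed
qed

lemma bridgesT': "bridges (sub_tree T)"
  unfolding bridges_def
proof (intro allI impI)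
  fix X Y assume XY: "{X, Y} \<in> sub_tree T" "X \<noteq> Y"
  then obtain u e where ue: "e \<in> T" "u \<in> e" "(X = Inl u \<and> Y = Inr e) \<or> (X = Inr e \<and> Y = Inl u)"
    using sub_tree_edge by blast
  define S where "S = {s. reach (T - {e}) u s}"
  define S' where "S' = Inl ` S \<union> Inr ` {f \<in> T. f \<subseteq> S}"
  obtain x where x: "e = {u, x}" "u \<noteq> x" using other_end ue by blast
  have xS: "x \<notin> S" using bridgesT ue x unfolding S_def bridges_def by blast
  have "Inl u \<in> S'" by (simp add: S'_def S_def)
  moreover have "Inr e \<notin> S'" using xS x by (auto simp: S'_def)
  ultimately have nr: "\<not> reach (sub_tree T - {{Inl u, Inr e}}) (Inl u) (Inr e)"
    using sub_cut[OF ue(1,2) S_def S'_def] by blast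
  from ue(3) show "\<not> reach (sub_tree T - {{X, Y}}) X Y"
  proof
    assume "X = Inl u \<and> Y = Inr e" then show ?thesis using nr by simp
  next
    assume "X = Inr e \<and> Y = Inl u" then show ?thesis using nr
      by (auto simp: insert_commute dest: reach_sym)
  qed
qed

lemma reachT'_Inl: "a \<in> V \<Longrightarrow> b \<in> V \<Longrightarrow> reach (sub_tree T) (Inl a) (Inl b)"
proof -
  assume ab: "a \<in> V" "b \<in> V"
  have "(a, b) \<in> (adj_rel T)\<^sup>*" using reachT[OF ab] by (simp add: reach_def)
  then show ?thesis
  proof (induction rule: rtrancl_induct)
    case base then show ?case by simp
  next
    case (step y z)
    then have yz: "{y, z} \<in> T" by (simp add: adj_rel_def)
    have "{Inl y, Inr {y, z}} \<in> sub_tree T" "{Inr {y, z}, Inl z} \<in> sub_tree T"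
      using yz by (auto simp: sub_tree_def insert_commute)
    then have "reach (sub_tree T) (Inl y) (Inl z)" by (metis reach_step reach_trans)
    then show ?case using step.IH by (metis reach_trans)
  qed
qed

lemma reachT': "X \<in> sub_vertices V T \<Longrightarrow> Y \<in> sub_vertices V T \<Longrightarrow> reach (sub_tree T) X Y"
proof -
  have toInl: "\<exists>a\<in>V. reach (sub_tree T) X (Inl a)" if "X \<in> sub_vertices V T" for X
  proof -
    from that consider a where "a \<in> V" "X = Inl a" | f where "f \<in> T" "X = Inr f"
      by (auto simp: sub_vertices_def)
    then show ?thesis
    proof cases
      case 1 then show ?thesis by (intro bexI[of _ a]) auto
    next
      case 2
      obtain a b where ab: "a \<in> V" "f = {a, b}" using edgeT 2 by blast
      have "{Inr f, Inl a} \<in> sub_tree T" using 2 ab by (auto simp: sub_tree_def insert_commute)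
      then show ?thesis using ab 2 by (meson reach_step)
    qed
  qed
  assume "X \<in> sub_vertices V T" "Y \<in> sub_vertices V T"
  then obtain a b where "a \<in> V" "b \<in> V" "reach (sub_tree T) X (Inl a)" "reach (sub_tree T) Y (Inl b)"
    using toInl by blast
  then show ?thesis using reachT'_Inl by (metis reach_sym reach_trans)
qed


lemma side_match:
  assumes l1: "l1 = {a1, b1}" "a1 \<in> V" "b1 \<in> V" "a1 \<noteq> b1"
    and l2: "l2 = {a2, b2}" "a2 \<in> V" "b2 \<in> V" "a2 \<noteq> b2"
    and eq: "sub_end T r l1 a1 = sub_end T r l2 a2"
  shows "a1 = a2 \<or> ({a1, a2} \<in> T \<and> a1 \<noteq> a2 \<and> \<not> reach (T - {{a1, a2}}) a1 b1 \<and>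
     \<not> reach (T - {{a1, a2}}) a2 b2)"
proof -
  have c1: "(leafr a1 \<and> sub_end T r l1 a1 = Inl a1) \<or>
    (\<not> leafr a1 \<and> (\<exists>z. sub_end T r l1 a1 = Inr {a1, z} \<and> {a1, z} \<in> T \<and> a1 \<noteq> z \<and>
       reach {f \<in> T. a1 \<notin> f} z b1 \<and> \<not> reach (T - {{a1, z}}) a1 b1))"
    using sub_end_cases[OF l1(2,3,4)] l1(1) by simp
  have c2: "(leafr a2 \<and> sub_end T r l2 a2 = Inl a2) \<or>
    (\<not> leafr a2 \<and> (\<exists>z. sub_end T r l2 a2 = Inr {a2, z} \<and> {a2, z} \<in> T \<and> a2 \<noteq> z \<and>
       reach {f \<in> T. a2 \<notin> f} z b2 \<and> \<not> reach (T - {{a2, z}}) a2 b2))"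
    using sub_end_cases[OF l2(2,3,4)] l2(1) by simp
  show ?thesis
  proof (cases "a1 = a2")
    case True then show ?thesis by simp
  next
    case False
    from c1 c2 eq obtain z1 z2 where z: "sub_end T r l1 a1 = Inr {a1, z1}" "{a1, z1} \<in> T"
      "\<not> reach (T - {{a1, z1}}) a1 b1" "sub_end T r l2 a2 = Inr {a2, z2}"
      "\<not> reach (T - {{a2, z2}}) a2 b2"
      using False by auto
    then have "{a1, z1} = {a2, z2}" using eq by simp
    then have "z1 = a2" "z2 = a1" using False by (auto simp: doubleton_eq_iff)
    then show ?thesis using z False by (simp add: insert_commute)
  qed
qed

lemma sub_link_inj:
  assumes l: "l1 \<in> E - T" "l2 \<in> E - T" and eq: "sub_link T r l1 = sub_link T r l2"
  shows "l1 = l2"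
proof -
  obtain a1 b1 where ab1: "a1 \<in> V" "b1 \<in> V" "a1 \<noteq> b1" "l1 = {a1, b1}" using edgeE l by blast
  obtain a2 b2 where ab2: "a2 \<in> V" "b2 \<in> V" "a2 \<noteq> b2" "l2 = {a2, b2}" using edgeE l by blast
  have core: "{a1, b1} = {a2, b2}"
    if ab2': "a2 \<in> V" "b2 \<in> V" "a2 \<noteq> b2" "l2 = {a2, b2}"
      and e1: "sub_end T r l1 a1 = sub_end T r l2 a2" and e2: "sub_end T r l1 b1 = sub_end T r l2 b2"
    for a2 b2
  proof -
    have Ma: "a1 = a2 \<or> ({a1, a2} \<in> T \<and> a1 \<noteq> a2 \<and> \<not> reach (T - {{a1, a2}}) a1 b1 \<and>
      \<not> reach (T - {{a1, a2}}) a2 b2)"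
      using side_match[OF ab1(4,1,2,3) ab2'(4,1,2,3) e1] .
    have Mb: "b1 = b2 \<or> ({b1, b2} \<in> T \<and> b1 \<noteq> b2 \<and> \<not> reach (T - {{b1, b2}}) b1 a1 \<and>
      \<not> reach (T - {{b1, b2}}) b2 a2)"
      using side_match[of l1 b1 a1 l2 b2 a2] ab1 ab2' e2 by (simp add: insert_commute)
    show ?thesis
    proof (cases "a1 = a2")
      case True
      show ?thesis
      proof (cases "b1 = b2")
        case True then show ?thesis using \<open>a1 = a2\<close> by simp
      next
        case False
        then have h: "{b1, b2} \<in> T" "\<not> reach (T - {{b1, b2}}) b1 a1" "\<not> reach (T - {{b1, b2}}) b2 a1"
          using Mb \<open>a1 = a2\<close> by auto
        then show ?thesis using two_sides[OF h(1) ab1(1) ab1(2)] by (metis reach_sym)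
      qed
    next
      case False
      then have g: "{a1, a2} \<in> T" "\<not> reach (T - {{a1, a2}}) a1 b1" "\<not> reach (T - {{a1, a2}}) a2 b2"
        using Ma by auto
      show ?thesis
      proof (cases "b1 = b2")
        case True
        then show ?thesis using two_sides[OF g(1) ab1(2) ab1(1)] g by (metis reach_sym)
      next
        case False
        then have h: "{b1, b2} \<in> T" using Mb by auto
        show ?thesis
        proof (cases "{a1, a2} = {b1, b2}")
          case True
          then have "a1 = b2 \<and> a2 = b1" using ab1(3) by (auto simp: doubleton_eq_iff)
          then have "l1 = {a1, a2}" using ab1 by auto
          then show ?thesis using g(1) l(1) by simp
        next
          case False
          then have "reach (T - {{a1, a2}}) b1 b2" using h by (intro reach_step) simp
          then show ?thesis using two_sides[OF g(1) ab1(2) ab1(1)] g by (metis reach_sym reach_trans)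
        qed
      qed
    qed
  qed
  have "sub_link T r l1 = {sub_end T r l1 a1, sub_end T r l1 b1}" using ab1 by (simp add: sub_link_def)
  moreover have "sub_link T r l2 = {sub_end T r l2 a2, sub_end T r l2 b2}" using ab2 by (simp add: sub_link_def)
  ultimately have "(sub_end T r l1 a1 = sub_end T r l2 a2 \<and> sub_end T r l1 b1 = sub_end T r l2 b2) \<or>
     (sub_end T r l1 a1 = sub_end T r l2 b2 \<and> sub_end T r l1 b1 = sub_end T r l2 a2)"
    using eq by (metis doubleton_eq_iff)
  then show ?thesis
  proof
    assume "sub_end T r l1 a1 = sub_end T r l2 a2 \<and> sub_end T r l1 b1 = sub_end T r l2 b2"
    then show ?thesis using core[OF ab2] ab1 ab2 by simp
  next
    assume "sub_end T r l1 a1 = sub_end T r l2 b2 \<and> sub_end T r l1 b1 = sub_end T r l2 a2"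
    then show ?thesis using core[of b2 a2] ab1 ab2 by (simp add: insert_commute)
  qed
qed


definition cross :: "'a set \<Rightarrow> 'a set set" where
  "cross W = {f \<in> E. f \<inter> W \<noteq> {} \<and> \<not> f \<subseteq> W}"

lemma cut4:
  assumes W: "W \<subseteq> V" "s \<in> W" "t \<in> V" "t \<notin> W"
  shows "4 \<le> card (cross W)"
proof (rule ccontr)
  assume "\<not> 4 \<le> card (cross W)"
  then have "card (cross W) < 4" by simp
  moreover have "cross W \<subseteq> E" by (auto simp: cross_def)
  ultimately have "connected_graph V (E - cross W)" using conn by (simp add: k_edge_connected_def)
  then have "reach {e \<in> E - cross W. e \<subseteq> V} s t" using W by (auto simp: connected_graph_def reach_def)
  then have "t \<in> W"
  proof (rule reach_closed)
    show "s \<in> W" by fact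
  next
    fix x y assume "x \<in> W" "{x, y} \<in> {e \<in> E - cross W. e \<subseteq> V}"
    then show "y \<in> W" by (auto simp: cross_def)
  qed
  then show False using W by simp
qed

lemma finite_cross: "finite (cross W)"
  using finE by (auto simp: cross_def)

lemma part2:
  assumes e': "e' \<in> sub_tree T"
  shows "\<exists>l1' \<in> sub_link T r ` (E - T). \<exists>l2' \<in> sub_link T r ` (E - T).
            l1' \<noteq> l2' \<and> e' \<in> link_path (sub_tree T) l1' \<and> e' \<in> link_path (sub_tree T) l2'"
proof -
  obtain u e where ue: "e' = {Inl u, Inr e}" "e \<in> T" "u \<in> e" using e' by (auto simp: sub_tree_def)
  obtain x where x: "e = {u, x}" "u \<noteq> x" "x \<in> V" "u \<in> V" using other_end ue by blast
  define S where "S = {s. reach (T - {e}) u s}"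
  define S' where "S' = Inl ` S \<union> Inr ` {f \<in> T. f \<subseteq> S}"
  have xS: "x \<notin> S" using bridgesT ue x unfolding S_def bridges_def by blast
  have uS: "u \<in> S" by (simp add: S_def)
  have SV: "S \<subseteq> V"
  proof
    fix s assume "s \<in> S"
    then have "reach (T - {e}) u s" by (simp add: S_def)
    then show "s \<in> V"
    proof (rule reach_closed)
      show "u \<in> V" by fact
    next
      fix p q assume "p \<in> V" "{p, q} \<in> T - {e}"
      then show "q \<in> V" using TE EsubV by blast
    qed
  qed
  have Tstep: "q \<in> S" if "{p, q} \<in> T" "{p, q} \<noteq> e" "p \<in> S" for p q
  proof -
    have "reach (T - {e}) p q" using that by (intro reach_step) simp
    then show ?thesis using that(3) by (auto simp: S_def intro: reach_trans)
  qed
  have Tcross: "f = e" if h: "f \<in> T" "f \<inter> S \<noteq> {}" "\<not> f \<subseteq> S" for f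
  proof (rule ccontr)
    assume "f \<noteq> e"
    obtain p q where pq: "f = {p, q}" using edgeT h(1) by blast
    have "(p \<in> S \<and> q \<notin> S) \<or> (q \<in> S \<and> p \<notin> S)" using h pq by auto
    then show False
    proof
      assume "p \<in> S \<and> q \<notin> S" then show False using Tstep[of p q] h pq \<open>f \<noteq> e\<close> by auto
    next
      assume "q \<in> S \<and> p \<notin> S" then show False using Tstep[of q p] h pq \<open>f \<noteq> e\<close>
        by (auto simp: insert_commute)
    qed
  qed
  define Good where "Good = {l \<in> E - T. l \<inter> S \<noteq> {} \<and> \<not> l \<subseteq> S \<and> (u \<notin> l \<or> leafr u)}"
  have goodA: "e' \<in> link_path (sub_tree T) (sub_link T r l)" if l: "l \<in> Good" for l
  proof -
    obtain a b where ab: "a \<in> V" "b \<in> V" "a \<noteq> b" "l = {a, b}" "a \<in> S" "b \<notin> S"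
    proof -
      have "l \<in> E" using l by (simp add: Good_def)
      then obtain p q where pq: "p \<in> V" "q \<in> V" "p \<noteq> q" "l = {p, q}" using edgeE by blast
      have "(p \<in> S \<and> q \<notin> S) \<or> (q \<in> S \<and> p \<notin> S)" using l pq by (auto simp: Good_def)
      then show ?thesis using that pq by (metis insert_commute)
    qed
    have au: "a = u \<Longrightarrow> leafr u" using l ab by (auto simp: Good_def)
    define sa where "sa = sub_end T r l a"
    define sb where "sb = sub_end T r l b"
    have sa: "sa \<in> S' \<and> sa \<in> sub_vertices V T"
      using sub_end_cases[OF ab(1,2,3)]
    proof
      assume "leafr a \<and> sub_end T r {a, b} a = Inl a"
      then show ?thesis using ab by (auto simp: sa_def S'_def sub_vertices_def)
    next
      assume "\<not> leafr a \<and> (\<exists>z. sub_end T r {a, b} a = Inr {a, z} \<and> {a, z} \<in> T \<and> a \<noteq> z \<and>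
       reach {f \<in> T. a \<notin> f} z b \<and> \<not> reach (T - {{a, z}}) a b)"
      then obtain z where z: "\<not> leafr a" "sa = Inr {a, z}" "{a, z} \<in> T" using ab by (auto simp: sa_def)
      have "{a, z} \<noteq> e"
      proof
        assume "{a, z} = e"
        then have "a = u \<or> a = x" using x by auto
        then show False using au z(1) ab(5) xS by auto
      qed
      then have "z \<in> S" using Tstep z ab by blast
      then show ?thesis using z ab by (auto simp: S'_def sub_vertices_def)
    qed
    have sb: "sb \<notin> S' \<and> sb \<in> sub_vertices V T"
      using sub_end_cases[OF ab(2,1) ab(3)[symmetric]]
    proof
      assume "leafr b \<and> sub_end T r {b, a} b = Inl b"
      then show ?thesis using ab by (auto simp: sb_def S'_def sub_vertices_def insert_commute)
    next
      assume "\<not> leafr b \<and> (\<exists>z. sub_end T r {b, a} b = Inr {b, z} \<and> {b, z} \<in> T \<and> b \<noteq> z \<and>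
       reach {f \<in> T. b \<notin> f} z a \<and> \<not> reach (T - {{b, z}}) b a)"
      then obtain z where z: "sb = Inr {b, z}" "{b, z} \<in> T" using ab by (auto simp: sb_def insert_commute)
      then show ?thesis using ab by (auto simp: S'_def sub_vertices_def)
    qed
    have nr: "\<not> reach (sub_tree T - {e'}) sa sb"
      using sub_cut[OF ue(2,3) S_def S'_def] sa sb ue(1) by blast
    have neq: "sa \<noteq> sb" using sa sb by auto
    have "link_path (sub_tree T) {sa, sb} = {f \<in> sub_tree T. \<not> reach (sub_tree T - {f}) sa sb}"
      using link_path_cut[OF bridgesT' reachT' neq] sa sb by blast
    moreover have "sub_link T r l = {sa, sb}" using ab by (simp add: sub_link_def sa_def sb_def)
    ultimately show ?thesis using nr e' by simp
  qed
  have finGood: "finite Good" using finE by (auto simp: Good_def)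
  have cardGood: "2 \<le> card Good"
  proof (cases "leafr u")
    case True
    have "cross S \<subseteq> insert e Good"
      using Tcross True by (auto simp: cross_def Good_def)
    then have "card (cross S) \<le> card (insert e Good)" using finGood by (intro card_mono) auto
    also have "\<dots> \<le> Suc (card Good)" using finGood by (simp add: card_insert_if)
    finally show ?thesis using cut4[OF SV uS x(3) xS] by simp
  next
    case False
    define Eu where "Eu = {f \<in> E. u \<in> f}"
    define S0 where "S0 = S - {u}"
    have cEu: "card Eu = 4" using reg x by (simp add: Eu_def degree_def)
    have finEu: "finite Eu" using finE by (simp add: Eu_def)
    have "degree T u \<noteq> 1" using False by (simp add: leafr_def)
    moreover have "e \<in> {f \<in> T. u \<in> f}" using ue by simp
    moreover have "finite {f \<in> T. u \<in> f}" using finT by simp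
    ultimately obtain f where f: "f \<in> T" "u \<in> f" "f \<noteq> e"
    proof -
      assume th: "\<And>f. f \<in> T \<Longrightarrow> u \<in> f \<Longrightarrow> f \<noteq> e \<Longrightarrow> thesis"
      show thesis
      proof (rule ccontr)
        assume "\<not> thesis"
        then have "{f \<in> T. u \<in> f} = {e}" using th ue by blast
        then show False using \<open>degree T u \<noteq> 1\<close> by (simp add: degree_def)
      qed
    qed
    obtain t0 where t0: "f = {u, t0}" "u \<noteq> t0" using other_end f by blast
    have t0S: "t0 \<in> S0" using Tstep[of u t0] f t0 uS by (auto simp: S0_def)
    have Gd: "Good = {l \<in> E - T. l \<inter> S \<noteq> {} \<and> \<not> l \<subseteq> S \<and> u \<notin> l}"
      using False by (auto simp: Good_def)
    have d1: "cross S \<subseteq> (Eu \<inter> cross S) \<union> Good"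
      using Tcross ue by (auto simp: cross_def Gd Eu_def)
    have d2: "cross S0 \<subseteq> (Eu \<inter> cross S0) \<union> Good"
    proof
      fix g assume g: "g \<in> cross S0"
      show "g \<in> (Eu \<inter> cross S0) \<union> Good"
      proof (cases "u \<in> g")
        case True then show ?thesis using g by (auto simp: Eu_def cross_def)
      next
        case False
        then have "g \<inter> S \<noteq> {}" "\<not> g \<subseteq> S" using g by (auto simp: cross_def S0_def)
        moreover have "g \<notin> T" using Tcross calculation ue(3) False by blast
        ultimately show ?thesis using g False by (auto simp: cross_def Gd)
      qed
    qed
    have disj: "(Eu \<inter> cross S) \<inter> (Eu \<inter> cross S0) = {}"
    proof (rule ccontr)
      assume "(Eu \<inter> cross S) \<inter> (Eu \<inter> cross S0) \<noteq> {}"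
      then obtain g where g: "g \<in> E" "u \<in> g" "g \<inter> S0 \<noteq> {}" "\<not> g \<subseteq> S"
        by (auto simp: Eu_def cross_def)
      obtain p q where "g = {p, q}" using edgeE g by blast
      then show False using g uS by (auto simp: S0_def)
    qed
    have "card (Eu \<inter> cross S) + card (Eu \<inter> cross S0) = card ((Eu \<inter> cross S) \<union> (Eu \<inter> cross S0))"
      using disj finEu by (intro card_Un_disjoint[symmetric]) auto
    also have "\<dots> \<le> card Eu" using finEu by (intro card_mono) auto
    finally have s4: "card (Eu \<inter> cross S) + card (Eu \<inter> cross S0) \<le> 4" using cEu by simp
    have "card (cross S) \<le> card (Eu \<inter> cross S) + card Good"
      using card_mono[OF _ d1] card_Un_le[of "Eu \<inter> cross S" Good] finEu finGood
      by (meson finite_Int finite_UnI le_trans)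
    moreover have "card (cross S0) \<le> card (Eu \<inter> cross S0) + card Good"
      using card_mono[OF _ d2] card_Un_le[of "Eu \<inter> cross S0" Good] finEu finGood
      by (meson finite_Int finite_UnI le_trans)
    moreover have "4 \<le> card (cross S)" using cut4[OF SV uS x(3) xS] .
    moreover have "4 \<le> card (cross S0)" using cut4[of S0 t0 x] SV t0S x xS by (auto simp: S0_def)
    ultimately show ?thesis using s4 by linarith
  qed
  then obtain l1 l2 where l12: "l1 \<in> Good" "l2 \<in> Good" "l1 \<noteq> l2"
    by (metis One_nat_def card_le_Suc0_iff_eq not_less_eq_eq numeral_2_eq_2 finGood)
  have "sub_link T r l1 \<noteq> sub_link T r l2"
    using sub_link_inj l12 by (auto simp: Good_def)
  moreover have "l1 \<in> E - T" "l2 \<in> E - T" using l12 by (auto simp: Good_def)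
  ultimately show ?thesis using goodA l12 by blast
qed


lemma part1_core:
  assumes F': "F' \<subseteq> sub_link T r ` (E - T)"
    and k2: "k_edge_connected 2 (sub_vertices V T) (sub_tree T \<union> F')"
    and v: "v \<in> V" "\<not> leafr v"
    and u: "u \<in> V" "u \<noteq> v"
    and Hv: "Hv = {e \<in> T \<union> {l \<in> E - T. sub_link T r l \<in> F'}. v \<notin> e}"
    and C: "C = {x. reach Hv u x}"
    and y: "{v, y} \<in> T" "y \<in> C" "\<And>z. {v, z} \<in> T \<Longrightarrow> z \<in> C \<Longrightarrow> z = y"
  shows False
proof -
  define F where "F = {l \<in> E - T. sub_link T r l \<in> F'}"
  define S' where "S' = Inl ` C \<union> Inr ` {f \<in> T. f \<inter> C \<noteq> {}}"
  define eA where "eA = {v, y}"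
  define R where "R = (sub_tree T \<union> F') - {{Inl v, Inr eA}}"
  have HvF: "Hv = {e \<in> T \<union> F. v \<notin> e}" using Hv by (simp add: F_def)
  have vC: "v \<notin> C"
  proof
    assume "v \<in> C"
    then have "reach Hv u v" by (simp add: C)
    then have "v \<in> - {v}"
    proof (rule reach_closed)
      show "u \<in> - {v}" using u by simp
    next
      fix p q assume "p \<in> - {v}" "{p, q} \<in> Hv" then show "q \<in> - {v}" using HvF by auto
    qed
    then show False by simp
  qed
  have Cstep: "q \<in> C" if "p \<in> C" "reach Hv p q" for p q
    using that unfolding C by (metis mem_Collect_eq reach_trans)
  have TvHv: "{f \<in> T. v \<notin> f} \<subseteq> Hv" using HvF by auto
  have bS: "sub_end T r l b \<in> S'" if h: "l = {a, b}" "a \<in> V" "b \<in> V" "a \<noteq> b" "b \<in> C" for l a b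
    using sub_end_cases[OF h(3,2) h(4)[symmetric]]
  proof
    assume "leafr b \<and> sub_end T r {b, a} b = Inl b"
    then show ?thesis using h by (auto simp: S'_def insert_commute)
  next
    assume "\<not> leafr b \<and> (\<exists>z. sub_end T r {b, a} b = Inr {b, z} \<and> {b, z} \<in> T \<and> b \<noteq> z \<and>
       reach {f \<in> T. b \<notin> f} z a \<and> \<not> reach (T - {{b, z}}) b a)"
    then obtain z where z: "sub_end T r l b = Inr {b, z}" "{b, z} \<in> T" using h by (auto simp: insert_commute)
    then show ?thesis using h by (auto simp: S'_def)
  qed
  have linkcl: "sub_end T r l b \<in> S'"
    if l: "l \<in> F" "l = {a, b}" "a \<in> V" "b \<in> V" "a \<noteq> b" and sa: "sub_end T r l a \<in> S'" for l a b
  proof -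
    have lH: "l \<in> T \<union> F" using l by simp
    have caseC: ?thesis if aC: "a \<in> C"
    proof (cases "b = v")
      case False
      then have "l \<in> Hv" using HvF lH l(2) v u aC vC by auto
      then have "reach Hv a b" using l(2) by (metis reach_step)
      then have "b \<in> C" using Cstep aC by blast
      then show ?thesis using bS l by blast
    next
      case True
      obtain z' where z': "sub_end T r {b, a} b = Inr {b, z'}" "{b, z'} \<in> T" "reach {f \<in> T. b \<notin> f} z' a"
        using sub_end_cases[OF l(4,3) l(5)[symmetric]] v True by auto
      have "reach Hv a z'" using z' True TvHv by (metis reach_mono reach_sym)
      then have "z' \<in> C" using Cstep aC by blast
      then have "z' = y" using y(3)[of z'] z' True by simp
      then show ?thesis using z' True y(1,2) l(2) by (auto simp: S'_def insert_commute)
    qed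
    show ?thesis
    proof (cases "a \<in> C")
      case True then show ?thesis using caseC by simp
    next
      case False
      from sub_end_cases[OF l(3,4,5)] sa False
      obtain z where z: "sub_end T r l a = Inr {a, z}" "{a, z} \<in> T" "reach {f \<in> T. a \<notin> f} z b"
        using l(2) by (auto simp: S'_def)
      have zC: "z \<in> C" using z sa False by (auto simp: S'_def)
      have "a = v"
      proof (rule ccontr)
        assume "a \<noteq> v"
        moreover have "z \<noteq> v" using zC vC by auto
        ultimately have "{a, z} \<in> Hv" using z HvF by auto
        then have "reach Hv z a" by (metis reach_step reach_sym)
        then show False using Cstep zC False by blast
      qed
      then have "z = y" using y(3)[of z] z zC \<open>a = v\<close> by simp
      then have "reach Hv y b" using z \<open>a = v\<close> TvHv by (metis reach_mono)
      then have "b \<in> C" using Cstep y(2) by blast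
      then show ?thesis using bS l by blast
    qed
  qed
  have closed: "B \<in> S'" if h: "A \<in> S'" "{A, B} \<in> R" for A B
  proof -
    have "{A, B} \<in> sub_tree T \<and> {A, B} \<noteq> {Inl v, Inr eA} \<or> {A, B} \<in> F'" using h R_def by auto
    then show ?thesis
    proof
      assume AB: "{A, B} \<in> sub_tree T \<and> {A, B} \<noteq> {Inl v, Inr eA}"
      then obtain s f where sf: "f \<in> T" "s \<in> f" "(A = Inl s \<and> B = Inr f) \<or> (A = Inr f \<and> B = Inl s)"
        using sub_tree_edge by blast
      from sf(3) show ?thesis
      proof
        assume "A = Inl s \<and> B = Inr f" then show ?thesis using h sf by (auto simp: S'_def)
      next
        assume AB': "A = Inr f \<and> B = Inl s"
        then obtain c where c: "c \<in> f" "c \<in> C" using h AB' by (auto simp: S'_def)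
        obtain t where t: "f = {s, t}" "s \<noteq> t" using other_end sf by blast
        show ?thesis
        proof (cases "s \<in> C")
          case True then show ?thesis using AB' by (simp add: S'_def)
        next
          case False
          then have tC: "t \<in> C" "c = t" using c t by auto
          show ?thesis
          proof (cases "s = v")
            case True
            then have "t = y" using y(3)[of t] sf t tC True by simp
            then have "{A, B} = {Inl v, Inr eA}" using AB' True t by (auto simp: eA_def)
            then show ?thesis using AB by simp
          next
            case False
            have "t \<noteq> v" using tC vC by auto
            then have "f \<in> Hv" using False sf t HvF by auto
            then have "reach Hv t s" using t by (metis reach_step reach_sym)
            then show ?thesis using Cstep tC \<open>s \<notin> C\<close> by blast
          qed
        qed
      qed
    next
      assume "{A, B} \<in> F'"
      then obtain l where l: "l \<in> E - T" "{A, B} = sub_link T r l" using F' by blast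
      then have lF: "l \<in> F" using \<open>{A, B} \<in> F'\<close> by (simp add: F_def)
      obtain a b where ab: "a \<in> V" "b \<in> V" "a \<noteq> b" "l = {a, b}" using edgeE l by blast
      have "{A, B} = {sub_end T r l a, sub_end T r l b}" using l ab by (simp add: sub_link_def)
      then have "(A = sub_end T r l a \<and> B = sub_end T r l b) \<or> (A = sub_end T r l b \<and> B = sub_end T r l a)"
        by (metis doubleton_eq_iff)
      then show ?thesis
      proof
        assume "A = sub_end T r l a \<and> B = sub_end T r l b"
        then show ?thesis using linkcl[OF lF ab(4,1,2,3)] h by simp
      next
        assume "A = sub_end T r l b \<and> B = sub_end T r l a"
        then show ?thesis using linkcl[OF lF _ ab(2,1) ab(3)[symmetric]] ab(4) h
          by (simp add: insert_commute)
      qed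
    qed
  qed
  have eAT: "eA \<in> T" using y(1) by (simp add: eA_def)
  have inS: "Inr eA \<in> S'" unfolding S'_def eA_def using y(1,2) by blast
  have notS: "Inl v \<notin> S'" using vC by (auto simp: S'_def)
  have De: "{{Inl v, Inr eA}} \<subseteq> sub_tree T \<union> F'" using eAT by (auto simp: sub_tree_def eA_def)
  then have "connected_graph (sub_vertices V T) R"
    using k2 unfolding k_edge_connected_def R_def by (metis One_nat_def card.empty card_insert_disjoint
      empty_iff finite.emptyI lessI numeral_2_eq_2)
  moreover have "Inr eA \<in> sub_vertices V T" "Inl v \<in> sub_vertices V T"
    using eAT v by (auto simp: sub_vertices_def)
  ultimately have "reach {e \<in> R. e \<subseteq> sub_vertices V T} (Inr eA) (Inl v)"
    by (auto simp: connected_graph_def reach_def)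
  then have "reach R (Inr eA) (Inl v)" by (rule reach_mono) auto
  then have "Inl v \<in> S'" using inS by (rule reach_closed) (rule closed)
  then show False using notS by simp
qed


lemma part1:
  assumes F': "F' \<subseteq> sub_link T r ` (E - T)"
    and k2: "k_edge_connected 2 (sub_vertices V T) (sub_tree T \<union> F')"
  shows "k_vertex_connected 2 V (T \<union> {l \<in> E - T. sub_link T r l \<in> F'})"
proof -
  define H where "H = T \<union> {l \<in> E - T. sub_link T r l \<in> F'}"
  have HE: "H \<subseteq> E" using TE by (auto simp: H_def)
  have cardV: "2 < card V"
  proof -
    have "{e \<in> E. r \<in> e} \<subseteq> (\<lambda>w. {r, w}) ` (V - {r})"
    proof
      fix e assume "e \<in> {e \<in> E. r \<in> e}"
      then obtain w where "e = {r, w}" "w \<in> V" "w \<noteq> r"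
        using edgeE by (metis (no_types, lifting) insert_commute insertE mem_Collect_eq singletonD)
      then show "e \<in> (\<lambda>w. {r, w}) ` (V - {r})" by auto
    qed
    then have "card {e \<in> E. r \<in> e} \<le> card ((\<lambda>w. {r, w}) ` (V - {r}))"
      using finV by (intro card_mono) auto
    also have "\<dots> \<le> card (V - {r})" using finV by (intro card_image_le) auto
    also have "\<dots> = card V - 1" using root finV by simp
    finally show ?thesis using reg root by (simp add: degree_def)
  qed
  have X0: "connected_graph V {e \<in> H. e \<inter> {} = {}}"
    unfolding connected_graph_def reach_def[symmetric]
  proof (intro ballI)
    fix a b assume "a \<in> V" "b \<in> V"
    then have "reach T a b" by (rule reachT)
    then show "reach {e \<in> {e \<in> H. e \<inter> {} = {}}. e \<subseteq> V} a b"
      by (rule reach_mono) (use TE EsubV in \<open>auto simp: H_def\<close>)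
  qed
  have X1: "connected_graph (V - {v}) {e \<in> H. e \<inter> {v} = {}}" if v: "v \<in> V" for v
  proof -
    define Hv where "Hv = {e \<in> H. v \<notin> e}"
    have eq: "{e \<in> {e \<in> H. e \<inter> {v} = {}}. e \<subseteq> V - {v}} = Hv"
      using HE EsubV by (auto simp: Hv_def)
    have "reach Hv u w" if uw: "u \<in> V - {v}" "w \<in> V - {v}" for u w
    proof (rule ccontr)
      assume nuw: "\<not> reach Hv u w"
      define N where "N = {z. {v, z} \<in> T}"
      have nb: "\<exists>z\<in>N. reach Hv x z" if x: "x \<in> V" "x \<noteq> v" for x
      proof -
        obtain z where z: "{v, z} \<in> T" "reach {f \<in> T. v \<notin> f} z x"
          using first_edge[OF bridgesT reachT[OF v x(1)] x(2)[symmetric]] by blast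
        have "{f \<in> T. v \<notin> f} \<subseteq> Hv" by (auto simp: Hv_def H_def)
        then have "reach Hv x z" using z(2) by (metis reach_mono reach_sym)
        then show ?thesis using z(1) by (auto simp: N_def)
      qed
      define C where "C = {x. reach Hv u x}"
      define D where "D = {x. reach Hv w x}"
      have CN: "N \<inter> C \<noteq> {}" using nb[of u] uw by (auto simp: C_def)
      have DN: "N \<inter> D \<noteq> {}" using nb[of w] uw by (auto simp: D_def)
      have disj: "(N \<inter> C) \<inter> (N \<inter> D) = {}"
      proof (rule ccontr)
        assume "(N \<inter> C) \<inter> (N \<inter> D) \<noteq> {}"
        then obtain z where "reach Hv u z" "reach Hv w z" by (auto simp: C_def D_def)
        then show False using nuw by (metis reach_sym reach_trans)
      qed
      have NV: "N \<subseteq> V" using TE EsubV by (auto simp: N_def)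
      then have finN: "finite N" using finV by (rule finite_subset)
      have "card N \<le> card {f \<in> T. v \<in> f}"
      proof (rule card_inj_on_le)
        show "inj_on (\<lambda>z. {v, z}) N"
        proof (rule inj_onI)
          fix z1 z2 assume "z1 \<in> N" "z2 \<in> N" "{v, z1} = {v, z2}"
          moreover have "v \<noteq> z1" using \<open>z1 \<in> N\<close> edgeT by (force simp: N_def doubleton_eq_iff)
          ultimately show "z1 = z2" by (auto simp: doubleton_eq_iff)
        qed
        show "(\<lambda>z. {v, z}) ` N \<subseteq> {f \<in> T. v \<in> f}" by (auto simp: N_def)
        show "finite {f \<in> T. v \<in> f}" using finT by simp
      qed
      then have cN: "card N \<le> degree T v" by (simp add: degree_def)
      have "degree T v \<le> degree E v" unfolding degree_def using TE finE
        by (intro card_mono) auto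
      then have dT3: "degree T v \<le> 3" using reg nodeg4 v by force
      have "card (N \<inter> C) + card (N \<inter> D) = card ((N \<inter> C) \<union> (N \<inter> D))"
        using disj finN by (intro card_Un_disjoint[symmetric]) auto
      also have "\<dots> \<le> card N" using finN by (intro card_mono) auto
      finally have sumN: "card (N \<inter> C) + card (N \<inter> D) \<le> card N" .
      have c1: "card (N \<inter> C) \<ge> 1" "card (N \<inter> D) \<ge> 1" using CN DN finN
        by (auto simp: Suc_le_eq card_gt_0_iff)
      have "\<not> leafr v"
      proof
        assume "leafr v"
        then have "degree T v = 1" using root by (auto simp: leafr_def)
        then show False using sumN c1 cN by linarith
      qed
      have core: False if cy: "N \<inter> C' = {y}" and C': "C' = {x. reach Hv u' x}" and u': "u' \<in> V" "u' \<noteq> v"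
        for C' y u'
      proof (rule part1_core[OF F' k2 v \<open>\<not> leafr v\<close> u'])
        show "Hv = {e \<in> T \<union> {l \<in> E - T. sub_link T r l \<in> F'}. v \<notin> e}" by (simp add: Hv_def H_def)
        show "C' = {x. reach Hv u' x}" by fact
        show "{v, y} \<in> T" "y \<in> C'" using cy by (auto simp: N_def)
        show "z = y" if "{v, z} \<in> T" "z \<in> C'" for z using cy that by (auto simp: N_def)
      qed
      have "card (N \<inter> C) = 1 \<or> card (N \<inter> D) = 1" using sumN c1 cN dT3 by linarith
      then show False
      proof
        assume "card (N \<inter> C) = 1"
        then obtain y where "N \<inter> C = {y}" by (meson card_1_singletonE)
        then show False using core[OF _ C_def] uw by blast
      next
        assume "card (N \<inter> D) = 1"
        then obtain y where "N \<inter> D = {y}" by (meson card_1_singletonE)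
        then show False using core[OF _ D_def] uw by blast
      qed
    qed
    then show ?thesis unfolding connected_graph_def eq reach_def[symmetric] by blast
  qed
  show ?thesis unfolding k_vertex_connected_def H_def[symmetric]
  proof (intro conjI allI impI)
    show "2 < card V" by fact
  next
    fix X assume X: "X \<subseteq> V" "card X < 2"
    then have "finite X" using finV by (meson finite_subset)
    then have "card X = 0 \<or> card X = 1" using X by linarith
    then show "connected_graph (V - X) {e \<in> H. e \<inter> X = {}}"
    proof
      assume "card X = 0" then have "X = {}" using \<open>finite X\<close> by simp
      then show ?thesis using X0 by simp
    next
      assume "card X = 1"
      then obtain v where "X = {v}" by (meson card_1_singletonE)
      then show ?thesis using X1 X by simp
    qed
  qed
qed

end

theorem lemma15:
  fixes V :: "'a set" and E T :: "'a set set" and r :: 'a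
  assumes G: "graph V E"
    and reg: "\<forall>v\<in>V. degree E v = 4"
    and conn: "k_edge_connected 4 V E"
    and tree: "spanning_tree V E T"
    and nodeg4: "\<forall>v\<in>V. degree T v \<noteq> 4"
    and root: "r \<in> V" "degree T r = 1"
  shows "(\<forall>F' \<subseteq> sub_link T r ` (E - T).
            k_edge_connected 2 (sub_vertices V T) (sub_tree T \<union> F') \<longrightarrow>
            k_vertex_connected 2 V (T \<union> {l \<in> E - T. sub_link T r l \<in> F'}))
       \<and> (\<forall>e' \<in> sub_tree T. \<exists>l1' \<in> sub_link T r ` (E - T). \<exists>l2' \<in> sub_link T r ` (E - T).
            l1' \<noteq> l2' \<and> e' \<in> link_path (sub_tree T) l1' \<and> e' \<in> link_path (sub_tree T) l2')"
proof -
  interpret L15 V E T r using assms by unfold_locales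
  show ?thesis using part1 part2 by blast
qed

end
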